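(* Let $G=(V,E)$ be a connected simple graph with $n$ vertices. Then (a) $$\sum_{uv\in E}\frac{1}{|N(u)\cap N(v)|+2}\ \ge\ \frac{n-1}{2},$$ where the sum runs over the edges of $G$ (each edge counted once); (b) equality holds in (a) if and only if every biconnected component of $G$ is a clique.
   Context: For a vertex $u$, $N(u)=\{v\in V: uv\in E\}$ is its open neighbourhood (so $u\notin N(u)$), and $N(u)\cap N(v)$ is the set of common neighbours of $u$ and $v$. A biconnected component (block) of $G$ is a maximal connected subgraph of $G$ that has no cut vertex of its own; in particular a bridge together with its two endpoints forms a biconnected component (isomorphic to $K_2$). *)

theory Defs
  imports Complex_Main
begin

definition simple_graph :: "'a set \<Rightarrow> 'a set set \<Rightarrow> bool" where
  "simple_graph V E \<longleftrightarrow> finite V \<and> (\<forall>e\<in>E. e \<subseteq> V \<and> card e = 2)"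

definition nbr :: "'a set set \<Rightarrow> 'a \<Rightarrow> 'a set" where
  "nbr E u = {v. {u, v} \<in> E}"

definition adj :: "'a set set \<Rightarrow> ('a \<times> 'a) set" where
  "adj E = {(x, y). {x, y} \<in> E}"

definition connected_graph :: "'a set \<Rightarrow> 'a set set \<Rightarrow> bool" where
  "connected_graph V E \<longleftrightarrow> V \<noteq> {} \<and> (\<forall>u\<in>V. \<forall>v\<in>V. (u, v) \<in> (adj E)\<^sup>*)"

definition subgraph :: "'a set \<Rightarrow> 'a set set \<Rightarrow> 'a set \<Rightarrow> 'a set set \<Rightarrow> bool" where
  "subgraph V' E' V E \<longleftrightarrow> V' \<subseteq> V \<and> E' \<subseteq> E \<and> (\<forall>e\<in>E'. e \<subseteq> V')"

text \<open>x is a cut vertex of (V, E): deleting x disconnects two remaining vertices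
  that are connected in (V,E) (i.e. the number of components increases).\<close>
definition cut_vertex :: "'a set \<Rightarrow> 'a set set \<Rightarrow> 'a \<Rightarrow> bool" where
  "cut_vertex V E x \<longleftrightarrow> x \<in> V \<and>
     (\<exists>u\<in>V - {x}. \<exists>w\<in>V - {x}. (u, w) \<in> (adj E)\<^sup>* \<and> (u, w) \<notin> (adj {e\<in>E. x \<notin> e})\<^sup>*)"

definition has_no_cut_vertex :: "'a set \<Rightarrow> 'a set set \<Rightarrow> bool" where
  "has_no_cut_vertex V E \<longleftrightarrow> (\<forall>x. \<not> cut_vertex V E x)"

definition block :: "'a set \<Rightarrow> 'a set set \<Rightarrow> 'a set \<Rightarrow> 'a set set \<Rightarrow> bool" where
  "block V E B EB \<longleftrightarrow>
     subgraph B EB V E \<and> connected_graph B EB \<and> has_no_cut_vertex B EB \<and>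
     (\<forall>B' EB'. subgraph B' EB' V E \<and> connected_graph B' EB' \<and> has_no_cut_vertex B' EB'
        \<and> B \<subseteq> B' \<and> EB \<subseteq> EB' \<longrightarrow> B' = B \<and> EB' = EB)"

definition is_clique :: "'a set \<Rightarrow> 'a set set \<Rightarrow> bool" where
  "is_clique B EB \<longleftrightarrow> (\<forall>u\<in>B. \<forall>v\<in>B. u \<noteq> v \<longrightarrow> {u, v} \<in> EB)"

definition edge_weight :: "'a set set \<Rightarrow> 'a set \<Rightarrow> real" where
  "edge_weight E e = 1 / (real (card (\<Inter>v\<in>e. nbr E v)) + 2)"

end

theory Submission
  imports Defs
begin



definition cn :: "'a set set \<Rightarrow> 'a set \<Rightarrow> 'a set" where
  "cn E e = (\<Inter>v\<in>e. nbr E v)"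

definition cnt :: "'a set set \<Rightarrow> ('a \<Rightarrow> nat) \<Rightarrow> 'a set \<Rightarrow> bool" where
  "cnt E f e \<longleftrightarrow> (\<exists>u\<in>e. \<forall>w\<in>cn E e. f u < f w)"

definition HH :: "'a set set \<Rightarrow> ('a \<Rightarrow> nat) \<Rightarrow> 'a set set" where
  "HH E f = {e\<in>E. cnt E f e}"

definition Omega :: "'a set \<Rightarrow> ('a \<Rightarrow> nat) set" where
  "Omega V = {f. bij_betw f V {..<card V} \<and> (\<forall>x. x \<notin> V \<longrightarrow> f x = 0)}"

lemma adj_iff: "(u,v) \<in> adj E \<longleftrightarrow> {u,v} \<in> E" by (simp add: adj_def)

lemma adj_sym: "(u,v) \<in> adj E \<Longrightarrow> (v,u) \<in> adj E" by (simp add: adj_def insert_commute)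

lemma rtr_sym: "(u,v) \<in> (adj E)\<^sup>* \<Longrightarrow> (v,u) \<in> (adj E)\<^sup>*"
  by (induction rule: rtrancl_induct) (auto intro: converse_rtrancl_into_rtrancl adj_sym)

lemma sg_edge: "simple_graph V E \<Longrightarrow> {u,v} \<in> E \<Longrightarrow> u \<noteq> v \<and> u \<in> V \<and> v \<in> V"
  unfolding simple_graph_def by (cases "u = v") auto

lemma sg_edge2: "simple_graph V E \<Longrightarrow> e \<in> E \<Longrightarrow> \<exists>u v. e = {u,v} \<and> u \<noteq> v \<and> u \<in> V \<and> v \<in> V"
proof -
  assume "simple_graph V E" "e \<in> E"
  then have "e \<subseteq> V" "card e = 2" unfolding simple_graph_def by auto
  then obtain x y where "e = {x,y}" "x \<noteq> y" unfolding card_2_iff by blast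
  then show ?thesis using \<open>e \<subseteq> V\<close> by auto
qed

lemma cn_pair: "w \<in> cn E {u,v} \<longleftrightarrow> {u,w} \<in> E \<and> {v,w} \<in> E"
  by (simp add: cn_def nbr_def)

lemma cn_sub: "simple_graph V E \<Longrightarrow> e \<in> E \<Longrightarrow> cn E e \<subseteq> V \<and> cn E e \<inter> e = {} \<and> finite (cn E e)"
proof -
  assume sg: "simple_graph V E" and e: "e \<in> E"
  then obtain u v where uv: "e = {u,v}" "u \<noteq> v" using sg_edge2 by blast
  have 0: "w \<in> V \<and> w \<notin> e" if "w \<in> cn E e" for w
  proof -
    have "{u,w} \<in> E" "{v,w} \<in> E" using that unfolding uv(1) cn_pair by auto
    then have "u \<noteq> w" "v \<noteq> w" "w \<in> V" using sg_edge[OF sg] by blast+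
    then show ?thesis using uv by auto
  qed
  have 1: "cn E e \<subseteq> V" using 0 by blast
  have 2: "cn E e \<inter> e = {}" using 0 by blast
  have "finite V" using sg simple_graph_def by auto
  then show ?thesis using 1 2 finite_subset by blast
qed

lemma H_conn_edge:
  assumes sg: "simple_graph V E" and inj: "inj_on f V"
  shows "{u,v} \<in> E \<Longrightarrow> (u,v) \<in> (adj (HH E f))\<^sup>*"
proof (induction "min (f u) (f v)" arbitrary: u v rule: less_induct)
  case less
  show ?case
  proof (cases "cnt E f {u,v}")
    case True then have "(u,v) \<in> adj (HH E f)" using less.prems by (simp add: HH_def adj_def)
    thus ?thesis by blast
  next
    case False
    have ne: "cn E {u,v} \<noteq> {}" using False by (auto simp: cnt_def)
    then obtain w0 where "w0 \<in> cn E {u,v}" by blast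
    then obtain w where w: "w \<in> cn E {u,v}" "\<forall>w'. w' \<in> cn E {u,v} \<longrightarrow> f w \<le> f w'"
      using ex_has_least_nat[of "\<lambda>w. w \<in> cn E {u,v}" w0 f] by blast
    then have wu: "{u,w} \<in> E" "{v,w} \<in> E" by (auto simp: cn_pair)
    have uvV: "u \<noteq> v" "u \<in> V" "v \<in> V" using sg_edge[OF sg less.prems] by auto
    have wV: "w \<noteq> u" "w \<noteq> v" "w \<in> V" using sg_edge[OF sg wu(1)] sg_edge[OF sg wu(2)] by auto
    have "\<exists>w'\<in>cn E {u,v}. f w' \<le> f u" using False unfolding cnt_def by (meson insertI1 insertI2 not_less)
    then have "f w \<le> f u" using w by force
    moreover have "f w \<noteq> f u" using inj wV uvV by (metis inj_on_contraD)
    ultimately have fu: "f w < f u" by simp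
    have "\<exists>w'\<in>cn E {u,v}. f w' \<le> f v" using False unfolding cnt_def by (meson insertI1 insertI2 not_less)
    then have "f w \<le> f v" using w by force
    moreover have "f w \<noteq> f v" using inj wV uvV by (metis inj_on_contraD)
    ultimately have fv: "f w < f v" by simp
    have 1: "(u,w) \<in> (adj (HH E f))\<^sup>*" using less.hyps[of u w] wu fu fv by simp
    have "{w,v} \<in> E" using wu by (simp add: insert_commute)
    then have 2: "(w,v) \<in> (adj (HH E f))\<^sup>*" using less.hyps[of w v] wu fu fv by simp
    show ?thesis using 1 2 by simp
  qed
qed

lemma H_conn:
  assumes sg: "simple_graph V E" and c: "connected_graph V E" and inj: "inj_on f V"
  shows "\<forall>u\<in>V. \<forall>v\<in>V. (u,v) \<in> (adj (HH E f))\<^sup>*"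
proof -
  have "adj E \<subseteq> (adj (HH E f))\<^sup>*" using H_conn_edge[OF sg inj] by (auto simp: adj_def)
  then have "(adj E)\<^sup>* \<subseteq> (adj (HH E f))\<^sup>*" by (rule rtrancl_subset_rtrancl)
  then show ?thesis using c unfolding connected_graph_def by blast
qed




lemma span_tree:
  assumes fin: "finite V" and F: "\<forall>e\<in>F. e \<subseteq> V \<and> card e = 2" and r: "r \<in> V"
    and conn: "\<forall>v\<in>V. (r,v) \<in> (adj F)\<^sup>*"
  shows "\<exists>T \<subseteq> F. card T = card V - 1 \<and> (\<forall>v\<in>V. (r,v) \<in> (adj T)\<^sup>*)"
proof -
  define R where "R = adj F"
  define d where "d v = (LEAST k. (r,v) \<in> R^^k)" for v
  have dex: "(r,v) \<in> R^^(d v)" if "v \<in> V" for v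
  proof -
    have "\<exists>k. (r,v) \<in> R^^k" using conn that rtrancl_power unfolding R_def by blast
    then show ?thesis unfolding d_def by (rule LeastI_ex)
  qed
  have dle: "d v \<le> k" if "(r,v) \<in> R^^k" for v k
    unfolding d_def using that by (rule Least_le)
  have RV: "u \<in> V \<and> v \<in> V \<and> u \<noteq> v" if "(u,v) \<in> R" for u v
  proof -
    have "{u,v} \<in> F" using that unfolding R_def adj_def by simp
    then have "{u,v} \<subseteq> V" "card {u,v} = 2" using F by auto
    then show ?thesis by (cases "u = v") auto
  qed
  have dpos: "d v > 0" if "v \<in> V" "v \<noteq> r" for v
    using dex[OF that(1)] that(2) by (cases "d v") auto
  have pex: "\<exists>u. (r,u) \<in> R^^(d v - 1) \<and> (u,v) \<in> R" if "v \<in> V" "v \<noteq> r" for v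
  proof -
    have "d v = Suc (d v - 1)" using dpos[OF that] by simp
    then have "(r,v) \<in> R^^(Suc (d v - 1))" using dex[OF that(1)] by simp
    then show ?thesis by auto
  qed
  define par where "par v = (SOME u. (r,u) \<in> R^^(d v - 1) \<and> (u,v) \<in> R)" for v
  have par: "(r,par v) \<in> R^^(d v - 1) \<and> (par v,v) \<in> R" if "v \<in> V" "v \<noteq> r" for v
    unfolding par_def using someI_ex[OF pex[OF that]] .
  have parV: "par v \<in> V" if "v \<in> V" "v \<noteq> r" for v
    using par[OF that] RV by blast
  have dpar: "d (par v) = d v - 1" if "v \<in> V" "v \<noteq> r" for v
  proof -
    have a: "d (par v) \<le> d v - 1" using par[OF that] dle by blast
    have "(r,v) \<in> R^^(Suc (d (par v)))" using dex[OF parV[OF that]] par[OF that] by auto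
    then have "d v \<le> Suc (d (par v))" using dle by blast
    then show ?thesis using a by simp
  qed
  define T where "T = (\<lambda>v. {par v, v}) ` (V - {r})"
  have TF: "T \<subseteq> F" using par unfolding T_def R_def adj_def by auto
  have inj: "inj_on (\<lambda>v. {par v, v}) (V - {r})"
  proof (rule inj_onI)
    fix v w assume v: "v \<in> V - {r}" and w: "w \<in> V - {r}" and eq: "{par v, v} = {par w, w}"
    show "v = w"
    proof (rule ccontr)
      assume "v \<noteq> w"
      then have vw: "v = par w" "w = par v" using eq by (auto simp: doubleton_eq_iff)
      have "d v = d w - 1" using dpar[of w] w vw(1) by simp
      moreover have "d w = d v - 1" using dpar[of v] v vw(2) by simp
      moreover have "d v > 0" "d w > 0" using dpos v w by auto
      ultimately show False by simp
    qed
  qed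
  have cardT: "card T = card V - 1"
    unfolding T_def using card_image[OF inj] fin r by simp
  have connT: "\<forall>v\<in>V. d v = k \<longrightarrow> (r,v) \<in> (adj T)\<^sup>*" for k
  proof (induction k)
    case 0
    show ?case
    proof (intro ballI impI)
      fix v assume "v \<in> V" "d v = 0"
      then have "v = r" using dex[of v] by simp
      then show "(r,v) \<in> (adj T)\<^sup>*" by simp
    qed
  next
    case (Suc k)
    show ?case
    proof (intro ballI impI)
      fix v assume v: "v \<in> V" "d v = Suc k"
      have vr: "v \<noteq> r" using dle[of r 0] v by auto
      then have "(r, par v) \<in> (adj T)\<^sup>*" using Suc.IH parV dpar v by auto
      moreover have "(par v, v) \<in> adj T" unfolding T_def adj_def using v vr by auto
      ultimately show "(r,v) \<in> (adj T)\<^sup>*" by simp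
    qed
  qed
  show ?thesis using TF cardT connT by blast
qed

lemma card_lower:
  assumes fin: "finite V" and F: "\<forall>e\<in>F. e \<subseteq> V \<and> card e = 2" and r: "r \<in> V"
    and conn: "\<forall>v\<in>V. (r,v) \<in> (adj F)\<^sup>*"
  shows "card V - 1 \<le> card F"
proof -
  obtain T where T: "T \<subseteq> F" "card T = card V - 1" using span_tree[OF assms] by blast
  have "F \<subseteq> Pow V" using F by auto
  then have "finite F" using fin finite_subset by blast
  then show ?thesis using card_mono[of F T] T by simp
qed




definition sw :: "'a \<Rightarrow> 'a \<Rightarrow> 'a \<Rightarrow> 'a" where
  "sw s t x = (if x = s then t else if x = t then s else x)"

lemma sw_sw: "sw s t (sw s t x) = x" by (simp add: sw_def)
lemma sw_comm: "sw s t = sw t s" by (auto simp: sw_def fun_eq_iff)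

lemma sw_bij: "s \<in> V \<Longrightarrow> t \<in> V \<Longrightarrow> bij_betw (sw s t) V V"
  by (rule bij_betw_byWitness[where f'="sw s t"]) (auto simp: sw_def)

lemma Omega_sw: "f \<in> Omega V \<Longrightarrow> s \<in> V \<Longrightarrow> t \<in> V \<Longrightarrow> f \<circ> sw s t \<in> Omega V"
proof -
  assume f: "f \<in> Omega V" and st: "s \<in> V" "t \<in> V"
  have "bij_betw (f \<circ> sw s t) V {..<card V}"
    using bij_betw_trans[OF sw_bij[OF st]] f unfolding Omega_def by blast
  moreover have "\<forall>x. x \<notin> V \<longrightarrow> (f \<circ> sw s t) x = 0"
    using f st unfolding Omega_def sw_def by auto
  ultimately show ?thesis unfolding Omega_def by blast
qed

lemma Omega_finite: "finite V \<Longrightarrow> finite (Omega V)"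
proof -
  assume fV: "finite V"
  have "Omega V \<subseteq> {f. \<forall>x. (x \<in> V \<longrightarrow> f x \<in> {..<card V}) \<and> (x \<notin> V \<longrightarrow> f x = 0)}"
    unfolding Omega_def bij_betw_def by auto
  then show ?thesis using finite_set_of_finite_funs[OF fV, of "{..<card V}" 0] finite_subset by blast
qed

lemma Omega_inj: "f \<in> Omega V \<Longrightarrow> inj_on f V"
  unfolding Omega_def bij_betw_def by blast

lemma Omega_ne: "finite V \<Longrightarrow> Omega V \<noteq> {}"
proof -
  assume "finite V"
  then obtain h where h: "bij_betw h V {0..<card V}" using ex_bij_betw_finite_nat by blast
  define f where "f x = (if x \<in> V then h x else 0)" for x
  have "bij_betw f V {..<card V}"
    using h by (metis atLeast0LessThan bij_betw_cong f_def)
  then have "f \<in> Omega V" unfolding Omega_def f_def by auto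
  then show ?thesis by blast
qed

lemma minS_count:
  assumes fin: "finite V" and S: "S \<subseteq> V" "S \<noteq> {}"
  shows "\<forall>s\<in>S. card (Omega V) = card S * card {f \<in> Omega V. \<forall>w\<in>S-{s}. f s < f w}"
proof -
  define A where "A = (\<lambda>s. {f \<in> Omega V. \<forall>w\<in>S-{s}. f s < f w})"
  have fS: "finite S" using fin S finite_subset by blast
  have fO: "finite (Omega V)" using Omega_finite[OF fin] .
  have into: "(\<lambda>g. g \<circ> sw s t) ` A s \<subseteq> A t" if "s \<in> S" "t \<in> S" for s t
  proof
    fix h assume "h \<in> (\<lambda>g. g \<circ> sw s t) ` A s"
    then obtain g where g: "g \<in> A s" and h: "h = g \<circ> sw s t" by auto
    have gO: "g \<in> Omega V" and gs: "\<forall>w\<in>S-{s}. g s < g w" using g unfolding A_def by auto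
    have "h \<in> Omega V" unfolding h using Omega_sw[OF gO] that S by blast
    moreover have "\<forall>w\<in>S-{t}. h t < h w"
    proof
      fix w assume w: "w \<in> S - {t}"
      have ht: "h t = g s" unfolding h sw_def by simp
      show "h t < h w"
      proof (cases "w = s")
        case True
        then have "s \<noteq> t" using w by blast
        then have "h w = g t" unfolding h sw_def using True by simp
        then show ?thesis using gs ht \<open>s \<noteq> t\<close> that(2) by simp
      next
        case False
        then have "h w = g w" unfolding h sw_def using w by simp
        then show ?thesis using gs ht w False by simp
      qed
    qed
    ultimately show "h \<in> A t" unfolding A_def by blast
  qed
  have eqc: "card (A s) = card (A t)" if "s \<in> S" "t \<in> S" for s t
  proof -
    have "bij_betw (\<lambda>g. g \<circ> sw s t) (A s) (A t)"
    proof (rule bij_betw_byWitness[where f'="\<lambda>g. g \<circ> sw s t"])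
      show "\<forall>a\<in>A s. a \<circ> sw s t \<circ> sw s t = a" by (auto simp: fun_eq_iff sw_sw)
      show "\<forall>a\<in>A t. a \<circ> sw s t \<circ> sw s t = a" by (auto simp: fun_eq_iff sw_sw)
      show "(\<lambda>g. g \<circ> sw s t) ` A s \<subseteq> A t" using into that by blast
      show "(\<lambda>g. g \<circ> sw s t) ` A t \<subseteq> A s" using into[of t s] that sw_comm[of s t] by simp
    qed
    then show ?thesis by (rule bij_betw_same_card)
  qed
  have cover: "Omega V = (\<Union>s\<in>S. A s)"
  proof
    show "(\<Union>s\<in>S. A s) \<subseteq> Omega V" unfolding A_def by blast
    show "Omega V \<subseteq> (\<Union>s\<in>S. A s)"
    proof
      fix f assume f: "f \<in> Omega V"
      obtain s0 where "s0 \<in> S" using S by blast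
      then obtain s where s: "s \<in> S" "\<forall>y. y \<in> S \<longrightarrow> f s \<le> f y"
        using ex_has_least_nat[of "\<lambda>x. x \<in> S" s0 f] by blast
      have "\<forall>w\<in>S-{s}. f s < f w"
      proof
        fix w assume w: "w \<in> S - {s}"
        have "f s \<noteq> f w" using Omega_inj[OF f] s w S by (metis DiffD1 DiffD2 inj_on_contraD insertI1 subsetD)
        then show "f s < f w" using s w by force
      qed
      then show "f \<in> (\<Union>s\<in>S. A s)" using f s unfolding A_def by blast
    qed
  qed
  have disj: "\<forall>s\<in>S. \<forall>t\<in>S. s \<noteq> t \<longrightarrow> A s \<inter> A t = {}"
  proof (intro ballI impI)
    fix s t assume st: "s \<in> S" "t \<in> S" "s \<noteq> t"
    show "A s \<inter> A t = {}"
    proof (rule ccontr)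
      assume "A s \<inter> A t \<noteq> {}"
      then obtain f where "f \<in> A s" "f \<in> A t" by blast
      then have "f s < f t" "f t < f s" using st unfolding A_def by auto
      then show False by simp
    qed
  qed
  have finA: "\<forall>s\<in>S. finite (A s)" using fO unfolding A_def by auto
  have "card (Omega V) = (\<Sum>s\<in>S. card (A s))"
    using cover card_UN_disjoint[OF fS finA disj] by simp
  then have "card (Omega V) = card S * card (A s)" if "s \<in> S" for s
    using eqc[OF _ that] by simp
  then show ?thesis unfolding A_def by blast
qed




lemma edge_count:
  assumes sg: "simple_graph V E" and e: "e \<in> E"
  shows "real (card {f \<in> Omega V. cnt E f e}) * (real (card (cn E e)) + 2) = 2 * real (card (Omega V))"
proof -
  obtain u v where uv: "e = {u,v}" "u \<noteq> v" "u \<in> V" "v \<in> V" using sg_edge2[OF sg e] by blast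
  have cs: "cn E e \<subseteq> V" "cn E e \<inter> e = {}" "finite (cn E e)" using cn_sub[OF sg e] by auto
  have fV: "finite V" using sg simple_graph_def by auto
  define S where "S = e \<union> cn E e"
  have SV: "S \<subseteq> V" "S \<noteq> {}" using cs uv unfolding S_def by auto
  have cardS: "card S = card (cn E e) + 2"
    unfolding S_def using cs uv by (simp add: card_Un_disjoint)
  define A where "A = (\<lambda>s. {f \<in> Omega V. \<forall>w\<in>S-{s}. f s < f w})"
  have cA: "\<forall>s\<in>S. card (Omega V) = card S * card (A s)"
    using minS_count[OF fV SV] unfolding A_def by blast
  have uS: "u \<in> S" "v \<in> S" unfolding S_def uv by auto
  have cuv: "card (A u) = card (A v)"
  proof -
    have "card S * card (A u) = card S * card (A v)" using cA uS by metis
    moreover have "card S > 0" using cardS by simp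
    ultimately show ?thesis by simp
  qed
  have Su: "S - {u} = insert v (cn E e)" unfolding S_def uv using cs uv by auto
  have Sv: "S - {v} = insert u (cn E e)" unfolding S_def uv using cs uv by auto
  have eq: "{f \<in> Omega V. cnt E f e} = A u \<union> A v"
  proof (intro equalityI subsetI)
    fix f assume f: "f \<in> {f \<in> Omega V. cnt E f e}"
    then have fO: "f \<in> Omega V" and c: "cnt E f e" by auto
    have ne: "f u \<noteq> f v" using Omega_inj[OF fO] uv by (metis inj_on_contraD)
    from c have "(\<forall>w\<in>cn E e. f u < f w) \<or> (\<forall>w\<in>cn E e. f v < f w)"
      unfolding cnt_def uv by auto
    then show "f \<in> A u \<union> A v"
    proof
      assume a: "\<forall>w\<in>cn E e. f u < f w"
      show ?thesis
      proof (cases "f u < f v")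
        case True then show ?thesis using a fO Su unfolding A_def by auto
      next
        case False then have "f v < f u" using ne by simp
        then show ?thesis using a fO Sv unfolding A_def by fastforce
      qed
    next
      assume a: "\<forall>w\<in>cn E e. f v < f w"
      show ?thesis
      proof (cases "f v < f u")
        case True then show ?thesis using a fO Sv unfolding A_def by auto
      next
        case False then have "f u < f v" using ne by simp
        then show ?thesis using a fO Su unfolding A_def by fastforce
      qed
    qed
  next
    fix f assume "f \<in> A u \<union> A v"
    then show "f \<in> {f \<in> Omega V. cnt E f e}"
      unfolding A_def cnt_def using Su Sv uv by auto
  qed
  have disj: "A u \<inter> A v = {}"
  proof (rule ccontr)
    assume "A u \<inter> A v \<noteq> {}"
    then obtain f where "f \<in> A u" "f \<in> A v" by blast
    then have "f u < f v" "f v < f u" using Su Sv unfolding A_def by auto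
    then show False by simp
  qed
  have fin: "finite (A u)" "finite (A v)" using Omega_finite[OF fV] unfolding A_def by auto
  have "card {f \<in> Omega V. cnt E f e} = 2 * card (A u)"
    unfolding eq using card_Un_disjoint[OF fin disj] cuv by simp
  then have "card {f \<in> Omega V. cnt E f e} * card S = 2 * card (Omega V)"
    using cA uS by simp
  then have "real (card {f \<in> Omega V. cnt E f e} * card S) = real (2 * card (Omega V))" by metis
  then show ?thesis unfolding cardS by (simp add: algebra_simps)
qed

lemma card_filter_sum: "finite A \<Longrightarrow> real (card {x\<in>A. P x}) = (\<Sum>x\<in>A. if P x then 1 else 0)"
  by (simp add: sum.If_cases Int_def conj_commute)

lemma sum_eq:
  assumes sg: "simple_graph V E"
  shows "(\<Sum>f\<in>Omega V. real (card (HH E f))) = 2 * real (card (Omega V)) * (\<Sum>e\<in>E. edge_weight E e)"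
proof -
  have fV: "finite V" using sg simple_graph_def by auto
  have "E \<subseteq> Pow V" using sg unfolding simple_graph_def by blast
  then have fE: "finite E" using fV finite_subset by blast
  have fO: "finite (Omega V)" using Omega_finite[OF fV] .
  have "(\<Sum>f\<in>Omega V. real (card (HH E f))) = (\<Sum>f\<in>Omega V. \<Sum>e\<in>E. if cnt E f e then 1 else 0)"
    unfolding HH_def using card_filter_sum[OF fE] by simp
  also have "\<dots> = (\<Sum>e\<in>E. \<Sum>f\<in>Omega V. if cnt E f e then 1 else 0)"
    by (rule sum.swap)
  also have "\<dots> = (\<Sum>e\<in>E. real (card {f \<in> Omega V. cnt E f e}))"
    using card_filter_sum[OF fO] by simp
  also have "\<dots> = (\<Sum>e\<in>E. 2 * real (card (Omega V)) * edge_weight E e)"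
  proof (rule sum.cong)
    fix e assume e: "e \<in> E"
    have "real (card {f \<in> Omega V. cnt E f e}) * (real (card (cn E e)) + 2) = 2 * real (card (Omega V))"
      by (rule edge_count[OF sg e])
    moreover have "real (card (cn E e)) + 2 > 0" by simp
    ultimately show "real (card {f \<in> Omega V. cnt E f e}) = 2 * real (card (Omega V)) * edge_weight E e"
      unfolding edge_weight_def cn_def[symmetric] by (simp add: field_simps)
  qed simp
  also have "\<dots> = 2 * real (card (Omega V)) * (\<Sum>e\<in>E. edge_weight E e)"
    by (simp add: sum_distrib_left)
  finally show ?thesis .
qed




lemma short_path:
  assumes ab: "(a,b) \<in> (adj F)\<^sup>*" and ne: "a \<noteq> b"
  shows "\<exists>k p. p 0 = a \<and> p k = b \<and> k \<ge> 1 \<and> (\<forall>i<k. {p i, p (Suc i)} \<in> F) \<and>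
     (\<forall>i j. i < j \<longrightarrow> j \<le> k \<longrightarrow> p i \<noteq> p j) \<and>
     (\<forall>i j. i < j \<longrightarrow> j \<le> k \<longrightarrow> {p i, p j} \<in> F \<longrightarrow> j = Suc i)"
proof -
  define R where "R = adj F"
  define k where "k = (LEAST n. (a,b) \<in> R^^n)"
  have "\<exists>n. (a,b) \<in> R^^n" using ab rtrancl_power unfolding R_def by blast
  then have kk: "(a,b) \<in> R^^k" unfolding k_def by (rule LeastI_ex)
  have kmin: "k \<le> m" if "(a,b) \<in> R^^m" for m unfolding k_def using that by (rule Least_le)
  obtain p where p: "p 0 = a" "p k = b" "\<forall>i<k. (p i, p (Suc i)) \<in> R"
    using kk unfolding relpow_fun_conv by blast
  have k1: "k \<ge> 1" using p ne by (cases k) auto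
  have pre: "(a, p i) \<in> R^^i" if "i \<le> k" for i
    unfolding relpow_fun_conv using p that by (intro exI[of _ p]) auto
  have suf: "(p j, b) \<in> R^^(k - j)" if "j \<le> k" for j
    unfolding relpow_fun_conv using p that by (intro exI[of _ "\<lambda>m. p (j+m)"]) auto
  have inj: "p i \<noteq> p j" if "i < j" "j \<le> k" for i j
  proof
    assume eq: "p i = p j"
    have "(a,b) \<in> R^^i O R^^(k-j)" using pre[of i] suf[of j] eq that by auto
    then have "(a,b) \<in> R^^(i + (k-j))" by (simp add: relpow_add)
    then have "k \<le> i + (k - j)" by (rule kmin)
    then show False using that by simp
  qed
  have chord: "j = Suc i" if "i < j" "j \<le> k" "{p i, p j} \<in> F" for i j
  proof (rule ccontr)
    assume "j \<noteq> Suc i"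
    have "(p i, p j) \<in> R" using that(3) unfolding R_def adj_def by simp
    then have "(a, p j) \<in> R^^(Suc i)" using pre[of i] that by auto
    then have "(a,b) \<in> R^^(Suc i) O R^^(k-j)" using suf[of j] that by auto
    then have "(a,b) \<in> R^^(Suc i + (k-j))" by (simp only: relpow_add)
    then have "k \<le> Suc i + (k - j)" by (rule kmin)
    then show False using that \<open>j \<noteq> Suc i\<close> by simp
  qed
  have edges: "\<forall>i<k. {p i, p (Suc i)} \<in> F" using p(3) unfolding R_def adj_def by simp
  show ?thesis using p(1,2) k1 edges inj chord by blast
qed




lemma path_conn:
  assumes "\<forall>m. i \<le> m \<longrightarrow> m < l \<longrightarrow> {p m, p (Suc m)} \<in> FF" and "i \<le> l"
  shows "(p i, p l) \<in> (adj FF)\<^sup>*"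
  using assms
proof (induction l)
  case 0 then show ?case by simp
next
  case (Suc l)
  show ?case
  proof (cases "i = Suc l")
    case True then show ?thesis by simp
  next
    case False
    then have "i \<le> l" using Suc.prems by simp
    then have "(p i, p l) \<in> (adj FF)\<^sup>*" using Suc by simp
    moreover have "(p l, p (Suc l)) \<in> adj FF" using Suc.prems \<open>i \<le> l\<close> unfolding adj_def by simp
    ultimately show ?thesis by simp
  qed
qed

lemma not_cnt: "w \<in> cn E {u,v} \<Longrightarrow> f w < f u \<Longrightarrow> f w < f v \<Longrightarrow> \<not> cnt E f {u,v}"
proof
  assume w: "w \<in> cn E {u,v}" "f w < f u" "f w < f v" and "cnt E f {u,v}"
  then obtain x where x: "x \<in> {u,v}" "\<forall>w\<in>cn E {u,v}. f x < f w" unfolding cnt_def by blast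
  then have "f x < f w" using w by blast
  then show False using x w by auto
qed

lemma cycle_props:
  assumes sg: "simple_graph V E" and k2: "k \<ge> 2"
    and edges: "\<forall>i<k. {p i, p (Suc i)} \<in> E" and close: "{p 0, p k} \<in> E"
    and inj: "\<forall>i j. i < j \<longrightarrow> j \<le> k \<longrightarrow> p i \<noteq> p j"
  defines "C \<equiv> p ` {..k}" and "EC \<equiv> insert {p 0, p k} ((\<lambda>i. {p i, p (Suc i)}) ` {..<k})"
  shows "subgraph C EC V E \<and> connected_graph C EC \<and> has_no_cut_vertex C EC"
proof -
  have pV: "p i \<in> V" if "i \<le> k" for i
  proof (cases "i < k")
    case True then show ?thesis using edges sg_edge[OF sg] by blast
  next
    case False then have "i = k" using that by simp
    then show ?thesis using close sg_edge[OF sg] by blast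
  qed
  have dist: "p i \<noteq> p j" if "i \<le> k" "j \<le> k" "i \<noteq> j" for i j
    using inj that by (metis linorder_neqE_nat)
  have sub: "subgraph C EC V E"
    unfolding subgraph_def C_def EC_def using pV edges close by auto
  have con: "connected_graph C EC"
  proof -
    have p0: "(p 0, p i) \<in> (adj EC)\<^sup>*" if "i \<le> k" for i
      using path_conn[of 0 i p EC] that unfolding EC_def by auto
    then have "(u,v) \<in> (adj EC)\<^sup>*" if uC: "u \<in> C" and vC: "v \<in> C" for u v
    proof -
      obtain i1 where "i1 \<le> k" "u = p i1" using uC unfolding C_def by auto
      obtain i2 where "i2 \<le> k" "v = p i2" using vC unfolding C_def by auto
      have "(u, p 0) \<in> (adj EC)\<^sup>*" using rtr_sym[OF p0[OF \<open>i1 \<le> k\<close>]] \<open>u = p i1\<close> by simp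
      moreover have "(p 0, v) \<in> (adj EC)\<^sup>*" using \<open>i2 \<le> k\<close> \<open>v = p i2\<close> p0 by blast
      ultimately show ?thesis by (rule rtrancl_trans)
    qed
    then show ?thesis unfolding connected_graph_def C_def by blast
  qed
  have ncv: "\<not> cut_vertex C EC x" for x
  proof
    assume cv: "cut_vertex C EC x"
    then obtain j where j: "j \<le> k" "x = p j" unfolding cut_vertex_def C_def by auto
    define FF where "FF = {e\<in>EC. x \<notin> e}"
    define \<beta> where "\<beta> = (if j = 0 then p k else p 0)"
    have tob: "(p i, \<beta>) \<in> (adj FF)\<^sup>*" if "i \<le> k" "i \<noteq> j" for i
    proof (cases "i < j")
      case True
      have "\<forall>m. 0 \<le> m \<longrightarrow> m < i \<longrightarrow> {p m, p (Suc m)} \<in> FF"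
        unfolding FF_def EC_def using True j dist by auto
      then have "(p 0, p i) \<in> (adj FF)\<^sup>*" using path_conn[of 0 i p FF] by simp
      then show ?thesis using True rtr_sym[of "p 0" "p i" FF] unfolding \<beta>_def by simp
    next
      case False
      then have ij: "j < i" using that by simp
      have "\<forall>m. i \<le> m \<longrightarrow> m < k \<longrightarrow> {p m, p (Suc m)} \<in> FF"
        unfolding FF_def EC_def using ij j dist by auto
      then have ik: "(p i, p k) \<in> (adj FF)\<^sup>*" using path_conn[of i k p FF] that by simp
      show ?thesis
      proof (cases "j = 0")
        case True then show ?thesis using ik unfolding \<beta>_def by simp
      next
        case False
        have "j < k" using ij that by simp
        then have "{p k, p 0} \<in> FF" unfolding FF_def EC_def using j dist False
          by (auto simp: insert_commute)
        then have "(p k, p 0) \<in> adj FF" unfolding adj_def by simp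
        then show ?thesis using ik False unfolding \<beta>_def by simp
      qed
    qed
    from cv obtain u w where uw: "u \<in> C - {x}" "w \<in> C - {x}"
      "(u, w) \<notin> (adj {e\<in>EC. x \<notin> e})\<^sup>*" unfolding cut_vertex_def by blast
    obtain i1 where i1: "i1 \<le> k" "u = p i1" using uw unfolding C_def by auto
    obtain i2 where i2: "i2 \<le> k" "w = p i2" using uw unfolding C_def by auto
    have "i1 \<noteq> j" "i2 \<noteq> j" using uw i1 i2 j by auto
    then have "(u, \<beta>) \<in> (adj FF)\<^sup>*" "(w, \<beta>) \<in> (adj FF)\<^sup>*" using tob i1 i2 by auto
    then have "(u, w) \<in> (adj FF)\<^sup>*" using rtr_sym[of w \<beta> FF] by (meson rtrancl_trans)
    then show False using uw unfolding FF_def by simp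
  qed
  show ?thesis using sub con ncv unfolding has_no_cut_vertex_def by blast
qed

lemma block_ext:
  assumes sg: "simple_graph V E" and C: "subgraph C EC V E" "connected_graph C EC" "has_no_cut_vertex C EC"
  shows "\<exists>B EB. block V E B EB \<and> C \<subseteq> B \<and> EC \<subseteq> EB"
proof -
  have fV: "finite V" using sg simple_graph_def by auto
  define P where "P = (\<lambda>q. subgraph (fst q) (snd q) V E \<and> connected_graph (fst q) (snd q) \<and>
      has_no_cut_vertex (fst q) (snd q) \<and> C \<subseteq> fst q \<and> EC \<subseteq> snd q)"
  define \<mu> where "\<mu> = (\<lambda>q::'a set \<times> 'a set set. card (fst q) + card (snd q))"
  have P0: "P (C, EC)" unfolding P_def using C by simp
  have bnd: "\<forall>y. P y \<longrightarrow> \<mu> y < card V + card (Pow V) + 1"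
  proof (intro allI impI)
    fix y assume "P y"
    then have "fst y \<subseteq> V" "snd y \<subseteq> Pow V" unfolding P_def subgraph_def by auto
    then have "card (fst y) \<le> card V" "card (snd y) \<le> card (Pow V)"
      using fV by (auto intro: card_mono)
    then show "\<mu> y < card V + card (Pow V) + 1" unfolding \<mu>_def by simp
  qed
  obtain q where q: "P q" "\<forall>y. P y \<longrightarrow> \<mu> y \<le> \<mu> q"
    using Lattices_Big.ex_has_greatest_nat[OF P0 bnd] by blast
  obtain B EB where qq: "q = (B, EB)" by (cases q)
  have fin: "finite B'" "finite EB'" if "subgraph B' EB' V E" for B' EB'
  proof -
    show "finite B'" using that fV finite_subset unfolding subgraph_def by blast
    have "EB' \<subseteq> Pow V" using that unfolding subgraph_def by auto
    then show "finite EB'" using fV finite_subset by blast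
  qed
  have max: "\<forall>B' EB'. subgraph B' EB' V E \<and> connected_graph B' EB' \<and> has_no_cut_vertex B' EB' \<and> B \<subseteq> B' \<and> EB \<subseteq> EB' \<longrightarrow> B' = B \<and> EB' = EB"
  proof (intro allI impI)
    fix B' EB' assume a: "subgraph B' EB' V E \<and> connected_graph B' EB' \<and> has_no_cut_vertex B' EB' \<and> B \<subseteq> B' \<and> EB \<subseteq> EB'"
    then have "P (B', EB')" using q(1) qq unfolding P_def by auto
    then have le: "card B' + card EB' \<le> card B + card EB" using q(2) qq unfolding \<mu>_def by fastforce
    have "card B \<le> card B'" "card EB \<le> card EB'" using a fin[of B' EB'] by (auto intro: card_mono)
    then have "card B = card B'" "card EB = card EB'" using le by auto
    then show "B' = B \<and> EB' = EB" using a fin[of B' EB'] by (metis card_subset_eq)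
  qed
  have "block V E B EB"
    unfolding block_def using max q(1) qq unfolding P_def by auto
  then show ?thesis using q(1) qq unfolding P_def by auto
qed




lemma HH_sub: "HH E f \<subseteq> E" unfolding HH_def by auto

lemma H_lower:
  assumes sg: "simple_graph V E" and c: "connected_graph V E" and f: "f \<in> Omega V"
  shows "card V - 1 \<le> card (HH E f)"
proof -
  have fV: "finite V" using sg simple_graph_def by auto
  obtain r where r: "r \<in> V" using c unfolding connected_graph_def by auto
  have F: "\<forall>e\<in>HH E f. e \<subseteq> V \<and> card e = 2" using sg HH_sub unfolding simple_graph_def by blast
  show ?thesis using card_lower[OF fV F r] H_conn[OF sg c Omega_inj[OF f]] r by blast
qed

lemma clique_le:
  assumes sg: "simple_graph V E" and c: "connected_graph V E"
    and cl: "\<forall>B EB. block V E B EB \<longrightarrow> is_clique B EB" and f: "f \<in> Omega V"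
  shows "card (HH E f) \<le> card V - 1"
proof (rule ccontr)
  assume "\<not> card (HH E f) \<le> card V - 1"
  then have big: "card (HH E f) > card V - 1" by simp
  let ?H = "HH E f"
  have fV: "finite V" using sg simple_graph_def by auto
  have "E \<subseteq> Pow V" using sg unfolding simple_graph_def by blast
  then have fE: "finite E" using fV finite_subset by blast
  have fH: "finite ?H" using fE HH_sub finite_subset by blast
  obtain r where r: "r \<in> V" using c unfolding connected_graph_def by auto
  have F: "\<forall>e\<in>?H. e \<subseteq> V \<and> card e = 2" using sg HH_sub unfolding simple_graph_def by blast
  have injf: "inj_on f V" using Omega_inj[OF f] .
  obtain T where T: "T \<subseteq> ?H" "card T = card V - 1" "\<forall>v\<in>V. (r,v) \<in> (adj T)\<^sup>*"
    using span_tree[OF fV F r] H_conn[OF sg c injf] r by blast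
  have "\<not> ?H \<subseteq> T" using big T(2) card_mono[OF _ ] fH
    by (metis T(1) finite_subset leD)
  then obtain e where e: "e \<in> ?H" "e \<notin> T" by blast
  then have eE: "e \<in> E" using HH_sub by blast
  obtain a b where ab: "e = {a,b}" "a \<noteq> b" "a \<in> V" "b \<in> V" using sg_edge2[OF sg eE] by blast
  have TT: "T \<subseteq> ?H - {e}" using T(1) e by blast
  have mono: "(adj T)\<^sup>* \<subseteq> (adj (?H - {e}))\<^sup>*"
    by (rule rtrancl_mono) (use TT in \<open>auto simp: adj_def\<close>)
  have "(r,a) \<in> (adj T)\<^sup>*" "(r,b) \<in> (adj T)\<^sup>*" using T(3) ab by auto
  then have "(a,r) \<in> (adj T)\<^sup>*" "(r,b) \<in> (adj T)\<^sup>*" using rtr_sym[of r a T] by auto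
  then have "(a,b) \<in> (adj T)\<^sup>*" by (rule rtrancl_trans)
  then have abH: "(a,b) \<in> (adj (?H - {e}))\<^sup>*" using mono by blast
  obtain k p where p: "p 0 = a" "p k = b" "k \<ge> 1" "\<forall>i<k. {p i, p (Suc i)} \<in> ?H - {e}"
     "\<forall>i j. i < j \<longrightarrow> j \<le> k \<longrightarrow> p i \<noteq> p j"
    using short_path[OF abH ab(2)] by blast
  have k2: "k \<ge> 2"
  proof (rule ccontr)
    assume "\<not> k \<ge> 2"
    then have "k = 1" using p(3) by simp
    then have "{p 0, p 1} \<in> ?H - {e}" using p(4) by auto
    then show False using p(1,2) ab \<open>k = 1\<close> by simp
  qed
  have pE: "\<forall>i<k. {p i, p (Suc i)} \<in> E" using p(4) HH_sub by blast
  have cl0: "{p 0, p k} \<in> E" using eE ab p(1,2) by simp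
  define C where "C = p ` {..k}"
  define EC where "EC = insert {p 0, p k} ((\<lambda>i. {p i, p (Suc i)}) ` {..<k})"
  have cp: "subgraph C EC V E \<and> connected_graph C EC \<and> has_no_cut_vertex C EC"
    using cycle_props[OF sg k2 pE cl0 p(5)] unfolding C_def EC_def by blast
  then obtain B EB where B: "block V E B EB" "C \<subseteq> B" "EC \<subseteq> EB" using block_ext[OF sg] by blast
  have "is_clique B EB" using cl B(1) by blast
  moreover have "EB \<subseteq> E" using B(1) unfolding block_def subgraph_def by blast
  ultimately have adjC: "{p i, p j} \<in> E" if "i \<le> k" "j \<le> k" "p i \<noteq> p j" for i j
    using that B(2) unfolding is_clique_def C_def by blast
  have dist: "p i \<noteq> p j" if "i \<le> k" "j \<le> k" "i \<noteq> j" for i j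
    using p(5) that by (metis linorder_neqE_nat)
  have pV: "p i \<in> V" if "i \<le> k" for i using cp that unfolding subgraph_def C_def by auto
  obtain m where m: "m \<le> k" "\<forall>y. y \<le> k \<longrightarrow> f (p m) \<le> f (p y)"
    using ex_has_least_nat[of "\<lambda>i. i \<le> k" 0 "\<lambda>i. f (p i)"] by auto
  have less: "f (p m) < f (p i)" if "i \<le> k" "i \<noteq> m" for i
  proof -
    have "f (p m) \<noteq> f (p i)" using injf pV m(1) that dist by (metis inj_on_contraD)
    then show ?thesis using m(2) that by force
  qed
  have bad: "\<not> cnt E f {p i, p j}" if "i \<le> k" "j \<le> k" "i \<noteq> m" "j \<noteq> m" for i j
  proof (rule not_cnt)
    show "p m \<in> cn E {p i, p j}" unfolding cn_pair
      using adjC that m(1) dist by (metis insert_commute)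
    show "f (p m) < f (p i)" "f (p m) < f (p j)" using less that by auto
  qed
  have inH: "{p i, p (Suc i)} \<in> ?H" if "i < k" for i using p(4) that by blast
  have "\<exists>i j. i \<le> k \<and> j \<le> k \<and> i \<noteq> m \<and> j \<noteq> m \<and> {p i, p j} \<in> ?H"
  proof (cases "m = 0")
    case True
    then show ?thesis using inH[of 1] k2 by (intro exI[of _ 1] exI[of _ 2]) (auto simp: numeral_2_eq_2)
  next
    case False
    show ?thesis
    proof (cases "m = k")
      case True
      then show ?thesis using inH[of 0] k2 False by (intro exI[of _ 0] exI[of _ 1]) auto
    next
      case False2: False
      have "{p 0, p k} \<in> ?H" using e ab p(1,2) by simp
      then show ?thesis using False False2 by (intro exI[of _ 0] exI[of _ k]) auto
    qed
  qed
  then obtain i j where ij: "i \<le> k" "j \<le> k" "i \<noteq> m" "j \<noteq> m" "{p i, p j} \<in> ?H" by blast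
  have "cnt E f {p i, p j}" using ij(5) unfolding HH_def by blast
  then show False using bad[OF ij(1-4)] by blast
qed




lemma triple:
  assumes EBE: "EB \<subseteq> E"
  shows "(a,c) \<in> (adj EB)\<^sup>* \<Longrightarrow> c \<noteq> a \<Longrightarrow> {a,c} \<notin> E \<Longrightarrow>
     \<exists>y z. {a,y} \<in> E \<and> y \<noteq> a \<and> (y,z) \<in> adj EB \<and> z \<noteq> a \<and> {a,z} \<notin> E"
proof (induction rule: rtrancl_induct)
  case base then show ?case by simp
next
  case (step y c)
  show ?case
  proof (cases "y = a")
    case True
    then have "{a,c} \<in> EB" using step(2) unfolding adj_def by simp
    then show ?thesis using step EBE by blast
  next
    case False
    show ?thesis
    proof (cases "{a,y} \<in> E")
      case True then show ?thesis using False step by blast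
    next
      case False2: False
      then show ?thesis using step.IH False by blast
    qed
  qed
qed

lemma nonclique_edge:
  assumes B: "block V E B EB" and nc: "\<not> is_clique B EB"
  shows "\<exists>u\<in>B. \<exists>v\<in>B. u \<noteq> v \<and> {u,v} \<notin> E"
proof -
  obtain u v where uv: "u \<in> B" "v \<in> B" "u \<noteq> v" "{u,v} \<notin> EB" using nc unfolding is_clique_def by blast
  have sub: "subgraph B EB V E" and con: "connected_graph B EB" and ncv: "has_no_cut_vertex B EB"
    and mx: "\<forall>B' EB'. subgraph B' EB' V E \<and> connected_graph B' EB' \<and> has_no_cut_vertex B' EB'
        \<and> B \<subseteq> B' \<and> EB \<subseteq> EB' \<longrightarrow> B' = B \<and> EB' = EB"
    using B unfolding block_def by blast+
  have "{u,v} \<notin> E"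
  proof
    assume uvE: "{u,v} \<in> E"
    define EB' where "EB' = insert {u,v} EB"
    have sub': "subgraph B EB' V E" using sub uvE uv unfolding subgraph_def EB'_def by auto
    have m1: "(adj EB)\<^sup>* \<subseteq> (adj EB')\<^sup>*" by (rule rtrancl_mono) (auto simp: adj_def EB'_def)
    have con': "connected_graph B EB'" using con m1 unfolding connected_graph_def by blast
    have ncv': "has_no_cut_vertex B EB'"
      unfolding has_no_cut_vertex_def
    proof (intro allI notI)
      fix x assume "cut_vertex B EB' x"
      then obtain u' w' where x: "x \<in> B" and uw: "u' \<in> B - {x}" "w' \<in> B - {x}"
        "(u', w') \<notin> (adj {e\<in>EB'. x \<notin> e})\<^sup>*" unfolding cut_vertex_def by blast
      have "(u',w') \<in> (adj EB)\<^sup>*" using con uw unfolding connected_graph_def by blast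
      then have "(u',w') \<in> (adj {e\<in>EB. x \<notin> e})\<^sup>*"
        using ncv x uw unfolding has_no_cut_vertex_def cut_vertex_def by blast
      moreover have "(adj {e\<in>EB. x \<notin> e})\<^sup>* \<subseteq> (adj {e\<in>EB'. x \<notin> e})\<^sup>*"
        by (rule rtrancl_mono) (auto simp: adj_def EB'_def)
      ultimately show False using uw by blast
    qed
    have "EB' = EB" using mx sub' con' ncv' unfolding EB'_def by blast
    then show False using uv unfolding EB'_def by blast
  qed
  then show ?thesis using uv by blast
qed




lemma nonclique_big:
  assumes sg: "simple_graph V E" and c: "connected_graph V E"
    and B: "block V E B EB" and nc: "\<not> is_clique B EB"
  shows "\<exists>f\<in>Omega V. card V \<le> card (HH E f)"
proof -
  have fV: "finite V" using sg simple_graph_def by auto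
  have "E \<subseteq> Pow V" using sg unfolding simple_graph_def by blast
  then have fE: "finite E" using fV finite_subset by blast
  have sub: "subgraph B EB V E" and con: "connected_graph B EB" and ncv: "has_no_cut_vertex B EB"
    using B unfolding block_def by blast+
  have EBE: "EB \<subseteq> E" using sub unfolding subgraph_def by blast
  obtain x c0 where xc: "x \<in> B" "c0 \<in> B" "x \<noteq> c0" "{x,c0} \<notin> E"
    using nonclique_edge[OF B nc] by blast
  have "(x,c0) \<in> (adj EB)\<^sup>*" using con xc unfolding connected_graph_def by blast
  then obtain y z where yz: "{x,y} \<in> E" "y \<noteq> x" "(y,z) \<in> adj EB" "z \<noteq> x" "{x,z} \<notin> E"
    using triple[OF EBE] xc by metis
  have yzEB: "{y,z} \<in> EB" using yz(3) unfolding adj_def by simp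
  then have yzB: "y \<in> B" "z \<in> B" using sub unfolding subgraph_def by auto
  have yzE: "{y,z} \<in> E" using yzEB EBE by blast
  have ynez: "y \<noteq> z" using sg_edge[OF sg yzE] by blast
  have yV: "y \<in> V" using sg_edge[OF sg yzE] by blast
  have "(x,z) \<in> (adj EB)\<^sup>*" using con xc yzB unfolding connected_graph_def by blast
  then have "(x,z) \<in> (adj {e\<in>EB. y \<notin> e})\<^sup>*"
    using ncv xc yzB yz ynez unfolding has_no_cut_vertex_def cut_vertex_def by blast
  moreover have "(adj {e\<in>EB. y \<notin> e})\<^sup>* \<subseteq> (adj {e\<in>E. y \<notin> e})\<^sup>*"
    by (rule rtrancl_mono) (use EBE in \<open>auto simp: adj_def\<close>)
  ultimately have xzF: "(x,z) \<in> (adj {e\<in>E. y \<notin> e})\<^sup>*" by blast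
  obtain k p where p: "p 0 = x" "p k = z" "k \<ge> 1" "\<forall>i<k. {p i, p (Suc i)} \<in> {e\<in>E. y \<notin> e}"
     "\<forall>i j. i < j \<longrightarrow> j \<le> k \<longrightarrow> p i \<noteq> p j"
     "\<forall>i j. i < j \<longrightarrow> j \<le> k \<longrightarrow> {p i, p j} \<in> {e\<in>E. y \<notin> e} \<longrightarrow> j = Suc i"
    using short_path[OF xzF yz(4)[symmetric]] by blast
  have k2: "k \<ge> 2"
  proof (rule ccontr)
    assume "\<not> k \<ge> 2"
    then have "k = 1" using p(3) by simp
    then have "{p 0, p 1} \<in> E" using p(4) by auto
    then show False using p(1,2) yz(5) \<open>k = 1\<close> by simp
  qed
  have py: "p i \<noteq> y" if "i \<le> k" for i
  proof (cases "i < k")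
    case True then show ?thesis using p(4) by auto
  next
    case False then show ?thesis using that p(2) ynez by simp
  qed
  have pE: "{p i, p (Suc i)} \<in> E" if "i < k" for i using p(4) that by blast
  have pV: "p i \<in> V" if "i \<le> k" for i
  proof (cases "i < k")
    case True then show ?thesis using pE sg_edge[OF sg] by blast
  next
    case False then have "i = k" using that by simp
    then show ?thesis using pE[of "k-1"] k2 sg_edge[OF sg] by (metis Suc_diff_1 diff_less less_le_trans zero_less_one one_le_numeral)
  qed
  have dist: "p i \<noteq> p j" if "i \<le> k" "j \<le> k" "i \<noteq> j" for i j
    using p(5) that by (metis linorder_neqE_nat)
  have adjE: "b = Suc a \<or> a = Suc b" if "a \<le> k" "b \<le> k" "{p a, p b} \<in> E" for a b
  proof -
    have "a \<noteq> b" using sg_edge[OF sg that(3)] by auto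
    then consider "a < b" | "b < a" by linarith
    then show ?thesis
    proof cases
      case 1
      then have "{p a, p b} \<in> {e\<in>E. y \<notin> e}" using that py[of a] py[of b] by auto
      then show ?thesis using p(6) 1 that by blast
    next
      case 2
      then have "{p b, p a} \<in> {e\<in>E. y \<notin> e}" using that py[of a] py[of b] by (auto simp: insert_commute)
      then show ?thesis using p(6) 2 that by blast
    qed
  qed
  define rk where "rk l = (if l = 0 then 0 else if l = k then 1 else l + 1)" for l
  define Q where "Q = map p ([0, k] @ [1..<k])"
  have Qlen: "length Q = k + 1" unfolding Q_def using k2 by simp
  have Qnth: "Q ! (rk l) = p l" if lk: "l \<le> k" for l
  proof -
    consider "l = 0" | "l = k" | "0 < l \<and> l < k" using lk k2 by linarith
    then show ?thesis
    proof cases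
      case 1 then show ?thesis unfolding Q_def rk_def by simp
    next
      case 2 then show ?thesis unfolding Q_def rk_def using k2 by simp
    next
      case 3
      then have rkl: "rk l = Suc (Suc (l - 1))" unfolding rk_def by simp
      have "map p [Suc 0..<k] ! (l - Suc 0) = p (Suc 0 + (l - Suc 0))"
        using 3 by (subst nth_map) auto
      then show ?thesis unfolding Q_def using 3 rkl by simp
    qed
  qed
  have rkle: "rk l \<le> k" if "l \<le> k" for l unfolding rk_def using that k2 by auto
  have Qset: "set Q = p ` {..k}"
  proof -
    have s: "set ([0, k] @ [1..<k]) = {..k}" using k2 by auto
    show ?thesis unfolding Q_def set_map s ..
  qed
  have Qdist: "distinct Q"
  proof -
    have i: "inj_on p {..k}" using dist by (meson atMost_iff inj_onI)
    have d: "distinct ([0, k] @ [1..<k])" using k2 by auto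
    have s: "set ([0, k] @ [1..<k]) = {..k}" using k2 by auto
    show ?thesis unfolding Q_def distinct_map s using i d by blast
  qed
  have yQ: "y \<notin> set Q" using py unfolding Qset by auto
  have QV: "set Q \<subseteq> V" using pV unfolding Qset by auto
  obtain R where R: "distinct R" "set R = V - set Q - {y}"
    using finite_distinct_list[of "V - set Q - {y}"] fV by blast
  define L where "L = Q @ y # R"
  have Ldist: "distinct L" unfolding L_def using Qdist yQ R by auto
  have Lset: "set L = V" unfolding L_def using R QV yV by auto
  have Llen: "length L = card V" using distinct_card[OF Ldist] Lset by simp
  have bijL: "bij_betw ((!) L) {..<card V} V" using bij_betw_nth[OF Ldist] Llen Lset by simp
  define g where "g = the_inv_into {..<card V} ((!) L)"
  define f where "f v = (if v \<in> V then g v else 0)" for v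
  have bijg: "bij_betw g V {..<card V}" unfolding g_def by (rule bij_betw_the_inv_into[OF bijL])
  have bijf: "bij_betw f V {..<card V}" using bijg by (rule bij_betw_cong[THEN iffD1, rotated]) (simp add: f_def)
  have fO: "f \<in> Omega V" unfolding Omega_def using bijf by (simp add: f_def)
  have injL: "inj_on ((!) L) {..<card V}" using bijL bij_betw_def by blast
  have fL: "f (L ! j) = j" if jl: "j < card V" for j
  proof -
    have "L ! j \<in> V" using nth_mem[of j L] jl Llen Lset by simp
    moreover have "g (L ! j) = j" unfolding g_def using the_inv_into_f_f[OF injL, of j] jl by simp
    ultimately show ?thesis unfolding f_def by simp
  qed
  have Lf: "L ! (f w) = w" "f w < card V" if wV: "w \<in> V" for w
  proof -
    have "w \<in> (!) L ` {..<card V}" using bij_betw_imp_surj_on[OF bijL] wV by simp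
    then have "L ! g w = w" unfolding g_def by (rule f_the_inv_into_f[OF injL])
    then show "L ! (f w) = w" unfolding f_def using wV by simp
    show "f w < card V" using bij_betw_apply[OF bijf wV] by simp
  qed
  have fp: "f (p l) = rk l" if "l \<le> k" for l
  proof -
    have "rk l < length Q" using rkle[OF that] Qlen by simp
    then have "L ! (rk l) = p l" unfolding L_def using Qnth[OF that] by (simp add: nth_append)
    moreover have "rk l < card V" using rkle[OF that] Qlen Llen unfolding L_def by simp
    ultimately show ?thesis using fL by metis
  qed
  have early: "w \<in> set Q" if "w \<in> V" "f w \<le> k" for w
  proof -
    have "f w < length Q" using that Qlen by simp
    then have "L ! (f w) = Q ! (f w)" unfolding L_def by (simp add: nth_append)
    then have "w = Q ! (f w)" using Lf(1)[OF that(1)] by simp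
    then show ?thesis using \<open>f w < length Q\<close> by (metis nth_mem)
  qed
  have injf: "inj_on f V" using bijf bij_betw_def by blast
  have cntI: "{u,v} \<in> HH E f"
    if uv: "{u,v} \<in> E" and noearly: "\<forall>w\<in>cn E {u,v}. f w < f u \<longrightarrow> False" for u v
  proof -
    have uV: "u \<in> V" using sg_edge[OF sg uv] by blast
    have "\<forall>w\<in>cn E {u,v}. f u < f w"
    proof
      fix w assume w: "w \<in> cn E {u,v}"
      have wV: "w \<in> V" "w \<noteq> u" using cn_sub[OF sg uv] w by auto
      then have "f w \<noteq> f u" using injf uV by (metis inj_on_contraD)
      then show "f u < f w" using noearly w by force
    qed
    then show ?thesis unfolding HH_def cnt_def using uv by blast
  qed
  have Hpath: "{p i, p (Suc i)} \<in> HH E f" if "i < k" for i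
  proof (rule cntI[OF pE[OF that]], intro ballI impI)
    fix w assume w: "w \<in> cn E {p i, p (Suc i)}" and lt: "f w < f (p i)"
    have wV: "w \<in> V" using cn_sub[OF sg pE[OF that]] w by auto
    have "f w \<le> k" using lt fp[of i] rkle[of i] that by simp
    then have "w \<in> set Q" using early wV by blast
    then obtain l where l: "l \<le> k" "w = p l" unfolding Qset by auto
    have "{p i, p l} \<in> E" "{p (Suc i), p l} \<in> E" using w unfolding cn_pair l(2) by auto
    then have "l = Suc i \<or> i = Suc l" "l = Suc (Suc i) \<or> Suc i = Suc l"
      using adjE[of i l] adjE[of "Suc i" l] l that by auto
    then show False by auto
  qed
  have e0E: "{p 0, y} \<in> E" using yz(1) p(1) by (simp add: insert_commute)
  have H0: "{p 0, y} \<in> HH E f"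
    by (rule cntI[OF e0E]) (use fp[of 0] in \<open>simp add: rk_def\<close>)
  have ekE: "{p k, y} \<in> E" using yzE p(2) by (simp add: insert_commute)
  have Hk: "{p k, y} \<in> HH E f"
  proof (rule cntI[OF ekE], intro ballI impI)
    fix w assume w: "w \<in> cn E {p k, y}" and lt: "f w < f (p k)"
    have wV: "w \<in> V" using cn_sub[OF sg ekE] w by auto
    have "f (p k) = 1" using fp[of k] k2 unfolding rk_def by simp
    then have "f w = f (p 0)" using lt fp[of 0] unfolding rk_def by simp
    then have "w = p 0" using injf wV pV[of 0] by (metis inj_on_contraD le0)
    then have "{p k, p 0} \<in> E" using w unfolding cn_pair by auto
    then show False using adjE[of k 0] k2 by auto
  qed
  define e0 where "e0 = {p k, y}"
  define H' where "H' = HH E f - {e0}"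
  have pathH': "\<forall>m. 0 \<le> m \<longrightarrow> m < k \<longrightarrow> {p m, p (Suc m)} \<in> H'"
  proof (intro allI impI)
    fix m assume "0 \<le> m" "m < k"
    then have "y \<notin> {p m, p (Suc m)}" using py by (metis Suc_leI empty_iff insert_iff less_imp_le_nat)
    then show "{p m, p (Suc m)} \<in> H'" unfolding H'_def e0_def using Hpath \<open>m < k\<close> by auto
  qed
  have "(p 0, p k) \<in> (adj H')\<^sup>*" using path_conn[of 0 k p H'] pathH' by simp
  moreover have "{p 0, y} \<in> H'" using H0 dist[of 0 k] k2 unfolding H'_def e0_def
    by (auto simp: doubleton_eq_iff)
  then have "(y, p 0) \<in> adj H'" unfolding adj_def by (simp add: insert_commute)
  ultimately have ypk: "(y, p k) \<in> (adj H')\<^sup>*" by simp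
  have "adj (HH E f) \<subseteq> (adj H')\<^sup>*"
  proof
    fix q assume q: "q \<in> adj (HH E f)"
    obtain s t where st: "q = (s,t)" by (cases q)
    show "q \<in> (adj H')\<^sup>*"
    proof (cases "{s,t} = e0")
      case True
      then have "(s = p k \<and> t = y) \<or> (s = y \<and> t = p k)" unfolding e0_def by (auto simp: doubleton_eq_iff)
      then show ?thesis using ypk rtr_sym[OF ypk] st by auto
    next
      case False
      then have "{s,t} \<in> H'" using q st unfolding H'_def adj_def by auto
      then show ?thesis using st unfolding adj_def by auto
    qed
  qed
  then have mono: "(adj (HH E f))\<^sup>* \<subseteq> (adj H')\<^sup>*" by (rule rtrancl_subset_rtrancl)
  have conH': "\<forall>v\<in>V. (y,v) \<in> (adj H')\<^sup>*" using H_conn[OF sg c injf] yV mono by blast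
  have F': "\<forall>e\<in>H'. e \<subseteq> V \<and> card e = 2" using sg HH_sub unfolding simple_graph_def H'_def by blast
  have lowH': "card V - 1 \<le> card H'" using card_lower[OF fV F' yV conH'] .
  have fH: "finite (HH E f)" using fE HH_sub finite_subset by blast
  have "card H' = card (HH E f) - 1" unfolding H'_def using Hk fH unfolding e0_def by simp
  moreover have "card V \<ge> 1" using yV fV card_gt_0_iff[of V] by auto
  moreover have "card (HH E f) \<ge> 1" using Hk fH card_gt_0_iff[of "HH E f"] by auto
  ultimately have "card V \<le> card (HH E f)" using lowH' by linarith
  then show ?thesis using fO by blast
qed




theorem theorem1:
  fixes V :: "'a set" and E :: "'a set set"
  assumes "simple_graph V E" and "connected_graph V E"
  shows "(\<Sum>e\<in>E. edge_weight E e) \<ge> (real (card V) - 1) / 2 \<and>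
         ((\<Sum>e\<in>E. edge_weight E e) = (real (card V) - 1) / 2 \<longleftrightarrow>
           (\<forall>B EB. block V E B EB \<longrightarrow> is_clique B EB))"
proof -
  note sg = assms(1) and c = assms(2)
  have fV: "finite V" using sg simple_graph_def by auto
  have Vne: "V \<noteq> {}" using c connected_graph_def by auto
  have n1: "card V \<ge> 1" using fV Vne card_gt_0_iff[of V] by auto
  define s where "s = (\<Sum>e\<in>E. edge_weight E e)"
  define N where "N = real (card (Omega V))"
  have fO: "finite (Omega V)" using Omega_finite[OF fV] .
  have "card (Omega V) > 0" using card_gt_0_iff[of "Omega V"] Omega_ne[OF fV] fO by blast
  then have Npos: "N > 0" unfolding N_def by simp
  have low: "real (card V) - 1 \<le> real (card (HH E f))" if "f \<in> Omega V" for f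
    using H_lower[OF sg c that] n1 by linarith
  have sumeq: "(\<Sum>f\<in>Omega V. real (card (HH E f))) = 2 * N * s"
    using sum_eq[OF sg] unfolding N_def s_def .
  have sumlow: "N * (real (card V) - 1) \<le> 2 * N * s"
  proof -
    have "(\<Sum>f\<in>Omega V. real (card V) - 1) \<le> (\<Sum>f\<in>Omega V. real (card (HH E f)))"
      by (rule sum_mono) (rule low)
    then show ?thesis using sumeq unfolding N_def by simp
  qed
  have "N * (real (card V) - 1) \<le> N * (2 * s)" using sumlow by (simp add: mult.assoc)
  then have "real (card V) - 1 \<le> 2 * s" using mult_le_cancel_left_pos[OF Npos] by blast
  then have ineq: "s \<ge> (real (card V) - 1) / 2" by (simp add: field_simps)
  have eqiff: "s = (real (card V) - 1) / 2 \<longleftrightarrow> (\<forall>f\<in>Omega V. real (card (HH E f)) = real (card V) - 1)"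
  proof
    assume seq: "s = (real (card V) - 1) / 2"
    have "(\<Sum>f\<in>Omega V. real (card (HH E f)) - (real (card V) - 1)) =
          (\<Sum>f\<in>Omega V. real (card (HH E f))) - (\<Sum>f\<in>Omega V. real (card V) - 1)"
      by (rule sum_subtractf)
    also have "\<dots> = 0" using sumeq seq unfolding N_def by simp
    finally have z: "(\<Sum>f\<in>Omega V. real (card (HH E f)) - (real (card V) - 1)) = 0" .
    have "\<forall>f\<in>Omega V. real (card (HH E f)) - (real (card V) - 1) = 0"
      using sum_nonneg_eq_0_iff[OF fO, of "\<lambda>f. real (card (HH E f)) - (real (card V) - 1)"] z low by simp
    then show "\<forall>f\<in>Omega V. real (card (HH E f)) = real (card V) - 1" by simp
  next
    assume all: "\<forall>f\<in>Omega V. real (card (HH E f)) = real (card V) - 1"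
    have "(\<Sum>f\<in>Omega V. real (card (HH E f))) = N * (real (card V) - 1)"
      using all unfolding N_def by simp
    then have "N * (2 * s) = N * (real (card V) - 1)" using sumeq by (simp add: mult.assoc)
    then have "2 * s = real (card V) - 1" using Npos by simp
    then show "s = (real (card V) - 1) / 2" by simp
  qed
  have cliq: "(\<forall>f\<in>Omega V. real (card (HH E f)) = real (card V) - 1) \<longleftrightarrow>
              (\<forall>B EB. block V E B EB \<longrightarrow> is_clique B EB)"
  proof
    assume all: "\<forall>f\<in>Omega V. real (card (HH E f)) = real (card V) - 1"
    show "\<forall>B EB. block V E B EB \<longrightarrow> is_clique B EB"
    proof (intro allI impI, rule ccontr)
      fix B EB assume "block V E B EB" "\<not> is_clique B EB"
      then obtain f where "f \<in> Omega V" "card V \<le> card (HH E f)"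
        using nonclique_big[OF sg c] by blast
      then show False using all by fastforce
    qed
  next
    assume cl: "\<forall>B EB. block V E B EB \<longrightarrow> is_clique B EB"
    show "\<forall>f\<in>Omega V. real (card (HH E f)) = real (card V) - 1"
    proof
      fix f assume f: "f \<in> Omega V"
      have "card (HH E f) \<le> card V - 1" using clique_le[OF sg c cl f] .
      then have "real (card (HH E f)) \<le> real (card V) - 1" using n1 by linarith
      then show "real (card (HH E f)) = real (card V) - 1" using low[OF f] by linarith
    qed
  qed
  show ?thesis using ineq eqiff cliq unfolding s_def by blast
qed


end
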